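(* Fix a general instance satisfying the unique-default-action assumption, and a bias $\alpha^\star\in(0,1]$. Let $\tau=\{(p_i,\nu_i)\}_{i=1}^k$ be any Bayes-plausible scheme, i.e. $p_i\ge0$, $\sum_ip_i=1$, $\nu_i\in\Delta(\Omega)$, $\sum_ip_i\nu_i=\mu_0$. For each $i$, let $a_i$ be any maximizer over $A$ of $\sum_\omega\big((1-\alpha^\star)\mu_0(\omega)+\alpha^\star\nu_i(\omega)\big)u_R(\cdot,\omega)$. Then $$\sum_ip_i\sum_\omega\nu_i(\omega)u_R(a_i,\omega)\ \ge\ \sum_\omega\mu_0(\omega)u_R(a_0,\omega).$$
   Context: Finite $\Omega$ and $A$, prior $\mu_0\in\Delta(\Omega)$, receiver utility $u_R:A\times\Omega\to\mathbb R$. The default action $a_0$ is the unique maximizer of $\sum_\omega\mu_0(\omega)u_R(a,\omega)$ over $a\in A$. A receiver with bias $\alpha^\star$ acts optimally with respect to the distorted belief $(1-\alpha^\star)\mu_0+\alpha^\star\nu$. The left-hand side is the receiver's true ex-ante expected utility under $\tau$; the right-hand side is her utility without persuasion. *)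

theory Defs
  imports Complex_Main
begin

definition is_dist :: "('w::finite \<Rightarrow> real) \<Rightarrow> bool" where
  "is_dist \<mu> \<longleftrightarrow> (\<forall>w. \<mu> w \<ge> 0) \<and> (\<Sum>w\<in>UNIV. \<mu> w) = 1"

definition exp_util :: "('a \<Rightarrow> 'w::finite \<Rightarrow> real) \<Rightarrow> ('w \<Rightarrow> real) \<Rightarrow> 'a \<Rightarrow> real" where
  "exp_util u \<mu> a = (\<Sum>w\<in>UNIV. \<mu> w * u a w)"

end

theory Submission
  imports Defs
begin

theorem propositionE2:
  fixes \<mu>0 :: "'w::finite \<Rightarrow> real"
    and u :: "'a::finite \<Rightarrow> 'w \<Rightarrow> real"
    and a0 :: 'a
    and \<alpha> :: real
    and k :: nat
    and p :: "nat \<Rightarrow> real"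
    and \<nu> :: "nat \<Rightarrow> 'w \<Rightarrow> real"
    and act :: "nat \<Rightarrow> 'a"
  assumes prior: "is_dist \<mu>0"
    and default: "\<forall>a. a \<noteq> a0 \<longrightarrow> exp_util u \<mu>0 a < exp_util u \<mu>0 a0"
    and alpha: "0 < \<alpha>" "\<alpha> \<le> 1"
    and p_nonneg: "\<forall>i<k. p i \<ge> 0"
    and p_sum: "(\<Sum>i<k. p i) = 1"
    and nu_dist: "\<forall>i<k. is_dist (\<nu> i)"
    and bayes: "\<forall>w. (\<Sum>i<k. p i * \<nu> i w) = \<mu>0 w"
    and best: "\<forall>i<k. \<forall>a. exp_util u (\<lambda>w. (1 - \<alpha>) * \<mu>0 w + \<alpha> * \<nu> i w) a
                    \<le> exp_util u (\<lambda>w. (1 - \<alpha>) * \<mu>0 w + \<alpha> * \<nu> i w) (act i)"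
  shows "(\<Sum>i<k. p i * exp_util u (\<nu> i) (act i)) \<ge> exp_util u \<mu>0 a0"
proof -
  define E where "E = exp_util u"
  define V0 where "V0 = E \<mu>0 a0"
  have lin: "exp_util u (\<lambda>w. (1 - \<alpha>) * \<mu>0 w + \<alpha> * \<nu> i w) a
      = (1 - \<alpha>) * E \<mu>0 a + \<alpha> * E (\<nu> i) a" for i a
    unfolding E_def exp_util_def
    by (simp add: distrib_right sum.distrib sum_distrib_left mult.assoc)
  have le0: "E \<mu>0 a \<le> V0" for a
    using default unfolding V0_def E_def by (cases "a = a0") (auto intro: less_imp_le)
  have step: "p i * ((1 - \<alpha>) * V0 + \<alpha> * E (\<nu> i) a0)
      \<le> p i * ((1 - \<alpha>) * E \<mu>0 (act i) + \<alpha> * E (\<nu> i) (act i))" if "i < k" for i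
    using best that p_nonneg lin by (intro mult_left_mono) (auto simp: V0_def)
  have swap: "(\<Sum>i<k. p i * E (\<nu> i) a0) = V0"
  proof -
    have "(\<Sum>i<k. p i * E (\<nu> i) a0) = (\<Sum>w\<in>UNIV. (\<Sum>i<k. p i * \<nu> i w) * u a0 w)"
      unfolding E_def exp_util_def
      by (simp add: sum_distrib_left sum_distrib_right mult.assoc sum.swap[of _ "{..<k}"])
    also have "\<dots> = V0" using bayes unfolding V0_def E_def exp_util_def by simp
    finally show ?thesis .
  qed
  define X where "X = (\<Sum>i<k. p i * E (\<nu> i) (act i))"
  define Y where "Y = (\<Sum>i<k. p i * E \<mu>0 (act i))"
  have "(\<Sum>i<k. p i * ((1 - \<alpha>) * V0 + \<alpha> * E (\<nu> i) a0))
      \<le> (\<Sum>i<k. p i * ((1 - \<alpha>) * E \<mu>0 (act i) + \<alpha> * E (\<nu> i) (act i)))"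
    by (rule sum_mono) (use step in auto)
  also have "\<dots> = (1 - \<alpha>) * Y + \<alpha> * X"
    unfolding X_def Y_def by (simp add: distrib_left sum.distrib sum_distrib_left mult.left_commute)
  finally have A: "(\<Sum>i<k. p i * ((1 - \<alpha>) * V0 + \<alpha> * E (\<nu> i) a0)) \<le> (1 - \<alpha>) * Y + \<alpha> * X" .
  have "(\<Sum>i<k. p i * ((1 - \<alpha>) * V0 + \<alpha> * E (\<nu> i) a0))
      = (1 - \<alpha>) * V0 * (\<Sum>i<k. p i) + \<alpha> * (\<Sum>i<k. p i * E (\<nu> i) a0)"
    by (simp add: distrib_left sum.distrib sum_distrib_left mult_ac)
  also have "\<dots> = V0" using p_sum swap by (simp add: algebra_simps)
  finally have B: "V0 \<le> (1 - \<alpha>) * Y + \<alpha> * X" using A by simp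
  have "Y \<le> (\<Sum>i<k. p i * V0)"
    unfolding Y_def by (rule sum_mono) (use p_nonneg le0 in \<open>auto intro: mult_left_mono\<close>)
  also have "\<dots> = V0" using p_sum by (simp add: sum_distrib_right[symmetric])
  finally have C: "Y \<le> V0" .
  have "(1 - \<alpha>) * Y \<le> (1 - \<alpha>) * V0" using C alpha by (intro mult_left_mono) auto
  with B have "\<alpha> * V0 \<le> \<alpha> * X" by (simp add: algebra_simps)
  hence "V0 \<le> X" using alpha by simp
  thus ?thesis unfolding X_def V0_def E_def .
qed

end
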